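(* Let $A,A_1,A_2,\ldots$ be band operators on $\ell^2(\mathbb{Z})$ such that $\sup_m\|A_m\|<\infty$ and the band-widths of $A$ and all $A_m$ are bounded by a common $w\in\mathbb{N}$. If \[ \forall N\in\mathbb{N}\ \exists m_0\in\mathbb{N}\ \forall m\ge m_0:\quad\mathcal{C}_N(A_m)=\mathcal{C}_N(A), \] then $\nu(A_m)\to\nu(A)$ and, in fact, $\nu(A_m-\lambda)\to\nu(A-\lambda)$ for every $\lambda\in\mathbb{C}$, as $m\to\infty$.
   Context: A band operator on $\ell^2(\mathbb{Z})$ with band-width at most $w$ is a bounded operator whose matrix entries satisfy $A_{ij}=0$ for $|i-j|>w$. The lower norm is $\nu(T):=\inf\{\|Tx\|:\|x\|=1\}$. For $N\in\mathbb{N}$, $\mathcal{C}_N(A)$ is the set of all $(N+2w)\times N$ matrices $C=(C_{ij})_{i\in1-w..N+w,\,j\in1..N}$ with $C_{ij}=A_{k+i,k+j}$ for some $k\in\mathbb{Z}$ (the "$N$-column submatrices" of $A$), where $a..b:=\{n\in\mathbb{Z}:a\le n\le b\}$. *)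

theory Defs
  imports "HOL-Analysis.Analysis"
begin

definition l2 :: "(int \<Rightarrow> complex) set" where
  "l2 = {x. (\<lambda>i. (cmod (x i))\<^sup>2) summable_on UNIV}"

definition l2norm :: "(int \<Rightarrow> complex) \<Rightarrow> real" where
  "l2norm x = sqrt (\<Sum>\<^sub>\<infinity>i. (cmod (x i))\<^sup>2)"

text \<open>Operators are represented by their (infinite) matrices a i j; the action on a
  sequence x is (A x)_i = sum_j a_ij x_j.\<close>
definition mat_apply :: "(int \<Rightarrow> int \<Rightarrow> complex) \<Rightarrow> (int \<Rightarrow> complex) \<Rightarrow> (int \<Rightarrow> complex)" where
  "mat_apply a x = (\<lambda>i. \<Sum>\<^sub>\<infinity>j. a i j * x j)"

definition band_op :: "nat \<Rightarrow> (int \<Rightarrow> int \<Rightarrow> complex) \<Rightarrow> bool" where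
  "band_op w a \<longleftrightarrow> (\<forall>i j. \<bar>i - j\<bar> > int w \<longrightarrow> a i j = 0) \<and>
     (\<exists>C. \<forall>x\<in>l2. mat_apply a x \<in> l2 \<and> l2norm (mat_apply a x) \<le> C * l2norm x)"

definition opnorm :: "(int \<Rightarrow> int \<Rightarrow> complex) \<Rightarrow> real" where
  "opnorm a = Sup {l2norm (mat_apply a x) | x. x \<in> l2 \<and> l2norm x = 1}"

definition lower_norm :: "(int \<Rightarrow> int \<Rightarrow> complex) \<Rightarrow> real" where
  "lower_norm a = Inf {l2norm (mat_apply a x) | x. x \<in> l2 \<and> l2norm x = 1}"

definition shift_id :: "(int \<Rightarrow> int \<Rightarrow> complex) \<Rightarrow> complex \<Rightarrow> (int \<Rightarrow> int \<Rightarrow> complex)" where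
  "shift_id a lam = (\<lambda>i j. a i j - (if i = j then lam else 0))"

text \<open>N-column submatrices: (N+2w) x N matrices with rows 1-w..N+w and columns 1..N,
  C_ij = A_{k+i,k+j}; represented as functions that vanish outside the index rectangle.\<close>
definition col_submatrices :: "nat \<Rightarrow> nat \<Rightarrow> (int \<Rightarrow> int \<Rightarrow> complex) \<Rightarrow> (int \<Rightarrow> int \<Rightarrow> complex) set" where
  "col_submatrices w N a = {(\<lambda>i j. if i \<in> {1 - int w .. int N + int w} \<and> j \<in> {1 .. int N}
                                     then a (k + i) (k + j) else 0) | k. True}"

end

theory Submission
  imports Defs
begin


definition band :: "nat \<Rightarrow> (int \<Rightarrow> int \<Rightarrow> complex) \<Rightarrow> bool" where
  "band w a \<longleftrightarrow> (\<forall>i j. \<bar>i - j\<bar> > int w \<longrightarrow> a i j = 0)"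

lemma band_opD: "band_op w a \<Longrightarrow> band w a"
  by (simp add: band_op_def band_def)

lemma l2norm_nonneg: "l2norm x \<ge> 0"
  unfolding l2norm_def by (simp add: infsum_nonneg)

lemma infsum_fin:
  assumes "finite S" "\<And>i. i \<notin> S \<Longrightarrow> f i = 0"
  shows "infsum f UNIV = sum f S"
proof -
  have "infsum f UNIV = infsum f S"
    by (rule infsum_cong_neutral) (use assms in auto)
  then show ?thesis using assms by simp
qed

lemma l2norm_fin:
  assumes "finite S" "\<And>i. i \<notin> S \<Longrightarrow> x i = 0"
  shows "l2norm x = sqrt (\<Sum>i\<in>S. (cmod (x i))\<^sup>2)"
  unfolding l2norm_def by (subst infsum_fin[OF assms(1)]) (use assms in auto)

lemma l2norm_fin_sq:
  assumes "finite S" "\<And>i. i \<notin> S \<Longrightarrow> x i = 0"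
  shows "(l2norm x)\<^sup>2 = (\<Sum>i\<in>S. (cmod (x i))\<^sup>2)"
  using l2norm_fin[OF assms] by (simp add: sum_nonneg)

lemma l2_fin:
  assumes "finite S" "\<And>i. i \<notin> S \<Longrightarrow> x i = 0"
  shows "x \<in> l2"
proof -
  have "(\<lambda>i. (cmod (x i))\<^sup>2) summable_on S" using assms(1) by simp
  moreover have "(\<lambda>i. (cmod (x i))\<^sup>2) summable_on S \<longleftrightarrow> (\<lambda>i. (cmod (x i))\<^sup>2) summable_on UNIV"
    by (rule summable_on_cong_neutral) (use assms in auto)
  ultimately show ?thesis unfolding l2_def by simp
qed

lemma mat_apply_fin:
  assumes "finite S" "\<And>j. j \<notin> S \<Longrightarrow> x j = 0"
  shows "mat_apply a x i = (\<Sum>j\<in>S. a i j * x j)"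
  unfolding mat_apply_def by (rule infsum_fin) (use assms in auto)

lemma mat_apply_band:
  assumes "band w a"
  shows "mat_apply a x i = (\<Sum>j\<in>{i - int w..i + int w}. a i j * x j)"
  unfolding mat_apply_def
  by (rule infsum_fin) (use assms in \<open>auto simp: band_def abs_if\<close>)

lemma mat_apply_supp:
  assumes "band w a" "\<And>j. j \<notin> {-n..n} \<Longrightarrow> x j = 0" "i \<notin> {-n - int w..n + int w}"
  shows "mat_apply a x i = 0"
proof -
  have "mat_apply a x i = (\<Sum>j\<in>{-n..n}. a i j * x j)"
    by (rule mat_apply_fin) (use assms in auto)
  also have "\<dots> = 0"
    by (rule sum.neutral) (use assms in \<open>auto simp: band_def\<close>)
  finally show ?thesis .
qed

lemma mat_apply_diff:
  assumes "band w a"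
  shows "mat_apply a (\<lambda>j. x j - y j) i = mat_apply a x i - mat_apply a y i"
  unfolding mat_apply_band[OF assms] by (simp add: algebra_simps sum_subtractf)

lemma mat_apply_cmult:
  assumes "band w a"
  shows "mat_apply a (\<lambda>j. c * x j) i = c * mat_apply a x i"
  unfolding mat_apply_band[OF assms] by (simp add: algebra_simps sum_distrib_left)

lemma l2_cmult:
  assumes "x \<in> l2"
  shows "(\<lambda>i. c * x i) \<in> l2 \<and> l2norm (\<lambda>i. c * x i) = cmod c * l2norm x"
proof -
  have s: "(\<lambda>i. (cmod (x i))\<^sup>2) summable_on UNIV" using assms by (simp add: l2_def)
  have e: "(\<lambda>i. (cmod (c * x i))\<^sup>2) = (\<lambda>i. (cmod c)\<^sup>2 * (cmod (x i))\<^sup>2)"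
    by (simp add: norm_mult power_mult_distrib)
  have s2: "(\<lambda>i. (cmod c)\<^sup>2 * (cmod (x i))\<^sup>2) summable_on UNIV"
    using s by (rule summable_on_cmult_right)
  have i2: "(\<Sum>\<^sub>\<infinity>i. (cmod c)\<^sup>2 * (cmod (x i))\<^sup>2) = (cmod c)\<^sup>2 * (\<Sum>\<^sub>\<infinity>i. (cmod (x i))\<^sup>2)"
    using s by (rule infsum_cmult_right)
  show ?thesis
    unfolding l2_def l2norm_def using s2 i2 by (simp add: e real_sqrt_mult)
qed

lemma L2_le_l2norm:
  assumes "x \<in> l2" "finite F"
  shows "L2_set (\<lambda>i. cmod (x i)) F \<le> l2norm x"
  unfolding L2_set_def l2norm_def
  by (rule real_sqrt_le_mono, rule finite_sum_le_infsum) (use assms in \<open>auto simp: l2_def\<close>)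

lemma l2_add:
  assumes "x \<in> l2" "y \<in> l2"
  shows "(\<lambda>i. x i + y i) \<in> l2 \<and> l2norm (\<lambda>i. x i + y i) \<le> l2norm x + l2norm y"
proof -
  define B where "B = l2norm x + l2norm y"
  have fin: "(\<Sum>i\<in>F. (cmod (x i + y i))\<^sup>2) \<le> B\<^sup>2" if "finite F" for F
  proof -
    have "L2_set (\<lambda>i. cmod (x i + y i)) F \<le> L2_set (\<lambda>i. cmod (x i) + cmod (y i)) F"
      by (rule L2_set_mono) (auto simp: norm_triangle_ineq)
    also have "\<dots> \<le> L2_set (\<lambda>i. cmod (x i)) F + L2_set (\<lambda>i. cmod (y i)) F"
      by (rule L2_set_triangle_ineq)
    also have "\<dots> \<le> B" unfolding B_def
      using L2_le_l2norm[OF assms(1) that] L2_le_l2norm[OF assms(2) that] by linarith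
    finally have "sqrt (\<Sum>i\<in>F. (cmod (x i + y i))\<^sup>2) \<le> B" by (simp add: L2_set_def)
    moreover have "0 \<le> (\<Sum>i\<in>F. (cmod (x i + y i))\<^sup>2)" by (simp add: sum_nonneg)
    ultimately show ?thesis
      by (metis power_mono real_sqrt_ge_zero real_sqrt_pow2)
  qed
  have sm: "(\<lambda>i. (cmod (x i + y i))\<^sup>2) summable_on UNIV"
    by (rule nonneg_bdd_above_summable_on) (use fin in \<open>auto intro!: bdd_aboveI\<close>)
  have "(\<Sum>\<^sub>\<infinity>i. (cmod (x i + y i))\<^sup>2) \<le> B\<^sup>2"
    by (rule infsum_le_finite_sums[OF sm]) (use fin in auto)
  then have "l2norm (\<lambda>i. x i + y i) \<le> sqrt (B\<^sup>2)" unfolding l2norm_def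
    by (rule real_sqrt_le_mono)
  moreover have "B \<ge> 0" unfolding B_def using l2norm_nonneg[of x] l2norm_nonneg[of y] by simp
  ultimately show ?thesis using sm unfolding l2_def B_def by simp
qed

lemma l2_diff:
  assumes "x \<in> l2" "y \<in> l2"
  shows "(\<lambda>i. x i - y i) \<in> l2 \<and> l2norm (\<lambda>i. x i - y i) \<le> l2norm x + l2norm y"
proof -
  have "(\<lambda>i. (-1) * y i) \<in> l2 \<and> l2norm (\<lambda>i. (-1) * y i) = l2norm y"
    using l2_cmult[OF assms(2), of "-1"] by simp
  then show ?thesis using l2_add[OF assms(1), of "\<lambda>i. (-1) * y i"] by simp
qed



definition delta0 :: "int \<Rightarrow> complex" where "delta0 = (\<lambda>j. if j = 0 then 1 else 0)"

lemma delta0: "delta0 \<in> l2" "l2norm delta0 = 1" "\<forall>j. j \<notin> {-0..0} \<longrightarrow> delta0 j = 0"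
proof -
  have v: "\<And>j. j \<notin> {0::int} \<Longrightarrow> delta0 j = 0" by (simp add: delta0_def)
  show "delta0 \<in> l2" by (rule l2_fin[of "{0}"]) (use v in auto)
  show "l2norm delta0 = 1" by (subst l2norm_fin[of "{0}"]) (auto simp: delta0_def)
  show "\<forall>j. j \<notin> {-0..0} \<longrightarrow> delta0 j = 0" by (simp add: delta0_def)
qed

lemma l2norm_pos:
  assumes "\<And>j. j \<notin> {-n..n} \<Longrightarrow> x j = 0" "x k \<noteq> 0"
  shows "l2norm x > 0"
proof -
  have "k \<in> {-n..n}" using assms by blast
  then have "0 < (\<Sum>i\<in>{-n..n}. (cmod (x i))\<^sup>2)"
    by (intro sum_pos2[of _ k]) (use assms in auto)
  then show ?thesis by (subst l2norm_fin[OF _ assms(1)]) auto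
qed

lemma scale_vec:
  assumes "band w a" "\<And>j. j \<notin> {-n..n} \<Longrightarrow> x j = 0" "x k \<noteq> 0"
  defines "y \<equiv> (\<lambda>j. complex_of_real (1 / l2norm x) * x j)"
  shows "y \<in> l2" "l2norm y = 1" "l2norm (mat_apply a y) = l2norm (mat_apply a x) / l2norm x"
proof -
  have pos: "l2norm x > 0" by (rule l2norm_pos[where n=n and x=x and k=k, OF assms(2,3)])
  have xl2: "x \<in> l2" by (rule l2_fin[of "{-n..n}", OF _ assms(2)]) auto
  have axl2: "mat_apply a x \<in> l2"
    by (rule l2_fin[of "{-n - int w..n + int w}"]) (simp, rule mat_apply_supp[OF assms(1)], rule assms(2), auto)
  show "y \<in> l2" "l2norm y = 1" using l2_cmult[OF xl2, of "complex_of_real (1 / l2norm x)"] pos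
    by (auto simp: y_def norm_divide)
  have "mat_apply a y = (\<lambda>i. complex_of_real (1 / l2norm x) * mat_apply a x i)"
    unfolding y_def using mat_apply_cmult[OF assms(1)] by blast
  then show "l2norm (mat_apply a y) = l2norm (mat_apply a x) / l2norm x"
    using l2_cmult[OF axl2, of "complex_of_real (1 / l2norm x)"] pos by (simp add: norm_divide)
qed

lemma lower_set_ne: "{l2norm (mat_apply a x) |x. x \<in> l2 \<and> l2norm x = 1} \<noteq> {}"
  using delta0 by blast

lemma lower_nonneg: "lower_norm a \<ge> 0"
  unfolding lower_norm_def
  by (rule cInf_greatest[OF lower_set_ne]) (auto simp: l2norm_nonneg)

lemma lower_le:
  assumes "x \<in> l2" "l2norm x = 1"
  shows "lower_norm a \<le> l2norm (mat_apply a x)"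
  unfolding lower_norm_def
  by (rule cInf_lower) (use assms l2norm_nonneg in \<open>auto intro!: bdd_belowI[of _ 0]\<close>)

lemma lower_le_fin:
  assumes "band w a" "\<And>j. j \<notin> {-n..n} \<Longrightarrow> x j = 0" "x k \<noteq> 0"
  shows "lower_norm a * l2norm x \<le> l2norm (mat_apply a x)"
proof -
  note s = scale_vec[where w=w and a=a and n=n and x=x and k=k, OF assms]
  have pos: "l2norm x > 0" by (rule l2norm_pos[where n=n and x=x and k=k, OF assms(2,3)])
  have "lower_norm a \<le> l2norm (mat_apply a x) / l2norm x"
    using lower_le[OF s(1) s(2), of a] s(3) by linarith
  then show ?thesis using pos by (simp add: field_simps)
qed

lemma opnorm_bound:
  assumes "band_op w a" "\<And>j. j \<notin> {-n..n} \<Longrightarrow> x j = 0"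
  shows "l2norm (mat_apply a x) \<le> opnorm a * l2norm x"
proof (cases "\<exists>j0. x j0 \<noteq> 0")
  case False
  then have "\<And>i. mat_apply a x i = 0" using mat_apply_fin[of "{-n..n}" x a] assms(2) by simp
  then have "l2norm (mat_apply a x) = 0" by (subst l2norm_fin[of "{}"]) auto
  moreover have "l2norm x = 0" using False by (subst l2norm_fin[of "{}"]) auto
  ultimately show ?thesis by simp
next
  case True
  then obtain j0 where j0: "x j0 \<noteq> 0" by blast
  have b: "band w a" using assms(1) by (rule band_opD)
  note s = scale_vec[where w=w and a=a and n=n and x=x and k=j0, OF b assms(2) j0]
  have pos: "l2norm x > 0" by (rule l2norm_pos[where n=n and x=x and k=j0, OF assms(2) j0])
  obtain C where C: "\<forall>x\<in>l2. mat_apply a x \<in> l2 \<and> l2norm (mat_apply a x) \<le> C * l2norm x"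
    using assms(1) by (auto simp: band_op_def)
  define y where "y = (\<lambda>j. complex_of_real (1 / l2norm x) * x j)"
  have mem: "l2norm (mat_apply a y) \<in> {l2norm (mat_apply a x) |x. x \<in> l2 \<and> l2norm x = 1}"
    using s(1,2) unfolding y_def by blast
  have "l2norm (mat_apply a y) \<le> opnorm a"
    unfolding opnorm_def
    by (rule cSup_upper[OF mem]) (use C in \<open>auto intro!: bdd_aboveI[of _ C]\<close>)
  then have "l2norm (mat_apply a x) / l2norm x \<le> opnorm a"
    using s(3) unfolding y_def by linarith
  then show ?thesis using pos by (simp add: field_simps)
qed

lemma opnorm_nonneg:
  assumes "band_op w a"
  shows "opnorm a \<ge> 0"
proof -
  obtain C where C: "\<forall>x\<in>l2. mat_apply a x \<in> l2 \<and> l2norm (mat_apply a x) \<le> C * l2norm x"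
    using assms(1) by (auto simp: band_op_def)
  have "l2norm (mat_apply a delta0) \<le> opnorm a"
    unfolding opnorm_def
    by (rule cSup_upper) (use delta0 C in \<open>auto intro!: bdd_aboveI[of _ C]\<close>)
  then show ?thesis using l2norm_nonneg order_trans by blast
qed



lemma finite_int_bounded: "finite (F::int set) \<Longrightarrow> \<exists>n. F \<subseteq> {-n..n}"
proof (induction F rule: finite_induct)
  case empty then show ?case by auto
next
  case (insert x F)
  then obtain n where "F \<subseteq> {-n..n}" by blast
  then have "\<And>y. y \<in> F \<Longrightarrow> -n \<le> y \<and> y \<le> n" by auto
  then have "insert x F \<subseteq> {-(max n \<bar>x\<bar>)..max n \<bar>x\<bar>}" by fastforce
  then show ?case by blast
qed

lemma lower_approx:
  assumes bo: "band_op w a" and mu: "\<mu> > lower_norm a"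
  shows "\<exists>n x. (\<forall>j. j \<notin> {-n..n} \<longrightarrow> x j = 0) \<and> (\<exists>k. x k \<noteq> 0) \<and>
               l2norm (mat_apply a x) \<le> \<mu> * l2norm x"
proof -
  have b: "band w a" using bo by (rule band_opD)
  obtain C where C: "\<forall>x\<in>l2. mat_apply a x \<in> l2 \<and> l2norm (mat_apply a x) \<le> C * l2norm x"
    using bo by (auto simp: band_op_def)
  have C0: "C \<ge> 0" using C delta0 l2norm_nonneg[of "mat_apply a delta0"] by fastforce
  have nu0: "lower_norm a \<ge> 0" by (rule lower_nonneg)
  define mu' where "mu' = (lower_norm a + \<mu>) / 2"
  have "\<exists>s\<in>{l2norm (mat_apply a x) |x. x \<in> l2 \<and> l2norm x = 1}. s < mu'"
    by (rule cInf_lessD[OF lower_set_ne]) (use mu in \<open>simp add: mu'_def lower_norm_def[symmetric]\<close>)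
  then obtain x where x: "x \<in> l2" "l2norm x = 1" "l2norm (mat_apply a x) < mu'" by blast
  define \<epsilon> where "\<epsilon> = \<mu> - mu'"
  have eps: "\<epsilon> > 0" "\<epsilon> < \<mu>" using mu nu0 by (auto simp: \<epsilon>_def mu'_def)
  define \<delta> where "\<delta> = \<epsilon> / (C + \<mu> + 1)"
  have d0: "\<delta> > 0" using eps C0 by (simp add: \<delta>_def)
  have d1: "\<delta> < 1" using eps C0 by (simp add: \<delta>_def)
  have d2: "\<delta> * (C + \<mu>) \<le> \<epsilon>"
  proof -
    have "\<delta> * (C + \<mu>) \<le> \<delta> * (C + \<mu> + 1)" using d0 by simp
    also have "\<dots> = \<epsilon>" using eps C0 by (simp add: \<delta>_def)
    finally show ?thesis .
  qed
  let ?f = "\<lambda>i. (cmod (x i))\<^sup>2"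
  have sm: "?f summable_on UNIV" using x(1) by (simp add: l2_def)
  obtain F where F: "finite F" "dist (sum ?f F) (infsum ?f UNIV) \<le> \<delta>\<^sup>2"
    using infsum_finite_approximation[OF sm, of "\<delta>\<^sup>2"] d0 by auto
  obtain n where n: "F \<subseteq> {-n..n}" using finite_int_bounded[OF F(1)] by blast
  have le1: "sum ?f F \<le> sum ?f {-n..n}" by (rule sum_mono2) (use n in auto)
  have le2: "sum ?f {-n..n} \<le> infsum ?f UNIV" by (rule finite_sum_le_infsum[OF sm]) auto
  have G: "infsum ?f UNIV - sum ?f {-n..n} \<le> \<delta>\<^sup>2" using F(2) le1 le2 by (simp add: dist_real_def)
  define xG where "xG = (\<lambda>j. if j \<in> {-n..n} then x j else 0)"
  define t where "t = (\<lambda>j. if j \<in> {-n..n} then 0 else x j)"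
  have xGs: "\<forall>j. j \<notin> {-n..n} \<longrightarrow> xG j = 0" by (simp add: xG_def)
  have xGl2: "xG \<in> l2" by (rule l2_fin[of "{-n..n}"]) (auto simp: xG_def)
  have tsm: "(\<lambda>i. (cmod (t i))\<^sup>2) summable_on UNIV"
    by (rule summable_on_comparison_test[OF sm]) (auto simp: t_def)
  have tl2: "t \<in> l2" using tsm by (simp add: l2_def)
  have xGsum: "infsum (\<lambda>i. (cmod (xG i))\<^sup>2) UNIV = sum ?f {-n..n}"
    by (subst infsum_fin[of "{-n..n}"]) (auto simp: xG_def)
  have split: "?f = (\<lambda>i. (cmod (xG i))\<^sup>2 + (cmod (t i))\<^sup>2)"
    by (auto simp: xG_def t_def)
  have "infsum ?f UNIV = infsum (\<lambda>i. (cmod (xG i))\<^sup>2) UNIV + infsum (\<lambda>i. (cmod (t i))\<^sup>2) UNIV"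
    by (subst split, rule infsum_add) (use xGl2 tsm in \<open>auto simp: l2_def\<close>)
  then have "infsum (\<lambda>i. (cmod (t i))\<^sup>2) UNIV \<le> \<delta>\<^sup>2" using G xGsum by simp
  then have tn: "l2norm t \<le> \<delta>" unfolding l2norm_def using d0
    by (metis real_sqrt_abs real_sqrt_le_mono abs_of_pos)
  have xeq: "xG = (\<lambda>j. x j - t j)" by (auto simp: xG_def t_def)
  have xeq2: "x = (\<lambda>j. xG j + t j)" by (auto simp: xG_def t_def)
  have axG: "mat_apply a xG = (\<lambda>i. mat_apply a x i - mat_apply a t i)"
    unfolding xeq using mat_apply_diff[OF b] by blast
  have "l2norm (mat_apply a xG) \<le> l2norm (mat_apply a x) + l2norm (mat_apply a t)"
    unfolding axG by (rule conjunct2[OF l2_diff]) (use C x tl2 in auto)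
  also have "\<dots> \<le> mu' + C * \<delta>"
    using x(3) C tl2 tn C0 mult_left_mono[OF tn C0] by fastforce
  finally have A1: "l2norm (mat_apply a xG) \<le> mu' + C * \<delta>" .
  have "1 \<le> l2norm xG + l2norm t"
    using l2_add[OF xGl2 tl2] x(2) xeq2 by simp
  then have A2: "l2norm xG \<ge> 1 - \<delta>" using tn by linarith
  have mu0: "\<mu> > 0" using mu nu0 by linarith
  have "mu' + C * \<delta> \<le> \<mu> * (1 - \<delta>)"
    using d2 by (simp add: \<epsilon>_def algebra_simps)
  also have "\<dots> \<le> \<mu> * l2norm xG" using A2 mu0 by simp
  finally have A3: "l2norm (mat_apply a xG) \<le> \<mu> * l2norm xG" using A1 by linarith
  have "\<exists>k. xG k \<noteq> 0"
  proof (rule ccontr)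
    assume "\<nexists>k. xG k \<noteq> 0"
    then have "l2norm xG = 0" by (subst l2norm_fin[of "{}"]) auto
    then show False using A2 d1 by linarith
  qed
  then show ?thesis using xGs A3 by blast
qed



lemma cmod_diff_sq: "(cmod (p - q))\<^sup>2 \<le> 2 * (cmod p)\<^sup>2 + 2 * (cmod q)\<^sup>2"
proof -
  have "cmod (p - q) \<le> cmod p + cmod q" by (rule norm_triangle_ineq4)
  then have "(cmod (p - q))\<^sup>2 \<le> (cmod p + cmod q)\<^sup>2" by (rule power_mono) simp
  also have "\<dots> \<le> 2 * (cmod p)\<^sup>2 + 2 * (cmod q)\<^sup>2"
    using sum_squares_ge_zero[of "cmod p - cmod q" 0] by (simp add: power2_eq_square algebra_simps)
  finally show ?thesis .
qed

lemma cmod_add_sq_eta: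
  assumes "(\<eta>::real) > 0"
  shows "(cmod (u + e))\<^sup>2 \<le> (1 + \<eta>) * (cmod u)\<^sup>2 + (1 + 1/\<eta>) * (cmod e)\<^sup>2"
proof -
  define A where "A = cmod u"
  define B where "B = cmod e"
  have "cmod (u + e) \<le> A + B" unfolding A_def B_def by (rule norm_triangle_ineq)
  then have "(cmod (u + e))\<^sup>2 \<le> (A + B)\<^sup>2" by (rule power_mono) simp
  also have "(A + B)\<^sup>2 \<le> (1 + \<eta>) * A\<^sup>2 + (1 + 1/\<eta>) * B\<^sup>2"
  proof -
    have "(1 + \<eta>) * A\<^sup>2 + (1 + 1/\<eta>) * B\<^sup>2 - (A + B)\<^sup>2 = (\<eta> * A - B)\<^sup>2 / \<eta>"
      using assms by (simp add: field_simps power2_eq_square)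
    also have "\<dots> \<ge> 0" using assms by simp
    finally show ?thesis by simp
  qed
  finally show ?thesis unfolding A_def B_def .
qed



definition inW :: "nat \<Rightarrow> int \<Rightarrow> int \<Rightarrow> bool" where
  "inW N s j \<longleftrightarrow> s + 1 \<le> j \<and> j \<le> s + int N"

definition win :: "nat \<Rightarrow> int \<Rightarrow> (int \<Rightarrow> complex) \<Rightarrow> int \<Rightarrow> complex" where
  "win N s x = (\<lambda>j. if inW N s j then x j else 0)"

definition Jset :: "nat \<Rightarrow> nat \<Rightarrow> int \<Rightarrow> int set" where
  "Jset N w s = {j. \<exists>i. \<bar>i - j\<bar> \<le> int w \<and> inW N s i \<noteq> inW N s j}"

lemma card_inW:
  assumes "lo \<le> i - int N" "i - 1 \<le> hi"
  shows "card {s \<in> {lo..hi}. inW N s i} = N"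
proof -
  have "{s \<in> {lo..hi}. inW N s i} = {i - int N..i - 1}"
    using assms by (auto simp: inW_def)
  then show ?thesis by simp
qed

lemma sum_if_card:
  assumes "finite A"
  shows "(\<Sum>s\<in>A. if P s then (c::real) else 0) = real (card {s \<in> A. P s}) * c"
  using assms by (simp add: sum.inter_filter[symmetric])

lemma sum_windows:
  assumes "finite T" "\<And>i. i \<in> T \<Longrightarrow> lo \<le> i - int N \<and> i - 1 \<le> hi"
  shows "(\<Sum>s\<in>{lo..hi}. \<Sum>i\<in>T. (cmod (win N s v i))\<^sup>2) = real N * (\<Sum>i\<in>T. (cmod (v i))\<^sup>2)"
proof -
  have "(\<Sum>s\<in>{lo..hi}. \<Sum>i\<in>T. (cmod (win N s v i))\<^sup>2)
      = (\<Sum>i\<in>T. \<Sum>s\<in>{lo..hi}. if inW N s i then (cmod (v i))\<^sup>2 else 0)"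
    by (subst sum.swap) (auto simp: win_def intro!: sum.cong)
  also have "\<dots> = (\<Sum>i\<in>T. real N * (cmod (v i))\<^sup>2)"
    by (rule sum.cong[OF refl], subst sum_if_card) (use assms card_inW in auto)
  finally show ?thesis by (simp add: sum_distrib_left)
qed

lemma card_J:
  "card {s \<in> S. j \<in> Jset N w s} \<le> 4 * w" if "finite S"
proof -
  have "{s \<in> S. j \<in> Jset N w s} \<subseteq> {j - int w..j + int w - 1} \<union> {j - int N - int w..j - int N + int w - 1}"
  proof
    fix s assume "s \<in> {s \<in> S. j \<in> Jset N w s}"
    then obtain i where "\<bar>i - j\<bar> \<le> int w" "inW N s i \<noteq> inW N s j"
      by (auto simp: Jset_def)
    then show "s \<in> {j - int w..j + int w - 1} \<union> {j - int N - int w..j - int N + int w - 1}"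
      by (auto simp: inW_def abs_if split: if_splits)
  qed
  then have "card {s \<in> S. j \<in> Jset N w s} \<le> card ({j - int w..j + int w - 1} \<union> {j - int N - int w..j - int N + int w - 1})"
    by (rule card_mono[rotated]) simp
  also have "\<dots> \<le> card {j - int w..j + int w - 1} + card {j - int N - int w..j - int N + int w - 1}"
    by (rule card_Un_le)
  also have "\<dots> \<le> 4 * w" by simp
  finally show ?thesis .
qed



lemma key_local:
  fixes a :: "int \<Rightarrow> int \<Rightarrow> complex" and x :: "int \<Rightarrow> complex" and n :: int
  assumes b: "band w a"
    and supp: "\<And>j. j \<notin> {-n..n} \<Longrightarrow> x j = 0"
    and Kb: "\<And>y. (\<And>j. j \<notin> {-n..n} \<Longrightarrow> y j = 0) \<Longrightarrow>
        (\<Sum>i\<in>{-n - int w..n + int w}. (cmod (mat_apply a y i))\<^sup>2) \<le> Kq * (\<Sum>j\<in>{-n..n}. (cmod (y j))\<^sup>2)"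
    and N1: "N \<ge> 1" and eta: "\<eta> > 0" and Kq: "Kq \<ge> 0"
    and hx: "(\<Sum>i\<in>{-n - int w..n + int w}. (cmod (mat_apply a x i))\<^sup>2) \<le> muq * (\<Sum>j\<in>{-n..n}. (cmod (x j))\<^sup>2)"
    and nz: "x k \<noteq> 0"
  shows "\<exists>s. (\<exists>j. win N s x j \<noteq> 0) \<and>
     (\<Sum>i\<in>{-n - int w..n + int w}. (cmod (mat_apply a (win N s x) i))\<^sup>2)
       \<le> ((1 + \<eta>) * muq + (1 + 1/\<eta>) * 16 * real w * Kq / real N) * (\<Sum>j\<in>{-n..n}. (cmod (win N s x j))\<^sup>2)"
proof -
  define X where "X = {-n..n}"
  define Ir where "Ir = {-n - int w..n + int w}"
  define Sr where "Sr = {-n - int N - int w..n + int w}"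
  define c where "c = (1 + \<eta>) * muq + (1 + 1/\<eta>) * 16 * real w * Kq / real N"
  define Q where "Q = (\<lambda>v. \<Sum>i\<in>Ir. (cmod (v i))\<^sup>2)"
  define R where "R = (\<lambda>v. \<Sum>j\<in>X. (cmod (v j))\<^sup>2)"
  define Ax where "Ax = mat_apply a x"
  define e where "e = (\<lambda>s i. mat_apply a (win N s x) i - win N s Ax i)"
  define ys where "ys = (\<lambda>s j. if j \<in> Jset N w s then x j else 0)"
  have finX: "finite X" "finite Ir" "finite Sr" by (auto simp: X_def Ir_def Sr_def)
  have XIr: "X \<subseteq> Ir" by (auto simp: X_def Ir_def)
  have winS: "\<And>v s j. (\<And>j. j \<notin> X \<Longrightarrow> v j = 0) \<Longrightarrow> j \<notin> X \<Longrightarrow> win N s v j = 0"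
    by (auto simp: win_def)
  have ysS: "\<And>s j. j \<notin> X \<Longrightarrow> ys s j = 0" using supp by (auto simp: ys_def X_def)
  have suppX: "\<And>j. j \<notin> X \<Longrightarrow> x j = 0" using supp by (simp add: X_def)
  have MA: "\<And>v i. (\<And>j. j \<notin> X \<Longrightarrow> v j = 0) \<Longrightarrow> mat_apply a v i = (\<Sum>j\<in>X. a i j * v j)"
    by (rule mat_apply_fin) (auto simp: X_def)
  have KbX: "\<And>v. (\<And>j. j \<notin> X \<Longrightarrow> v j = 0) \<Longrightarrow> Q (mat_apply a v) \<le> Kq * R v"
    unfolding Q_def R_def Ir_def X_def by (rule Kb) (auto simp: X_def)
  have winle: "\<And>s v. R (win N s v) \<le> R v"
    unfolding R_def by (rule sum_mono) (auto simp: win_def)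
  have winleQ: "\<And>s v. Q (win N s v) \<le> Q v"
    unfolding Q_def by (rule sum_mono) (auto simp: win_def)
  have E1: "e s i = mat_apply a (win N s (ys s)) i - win N s (mat_apply a (ys s)) i" for s i
  proof -
    have gen: "mat_apply a (win N s v) i - win N s (mat_apply a v) i
       = (\<Sum>j\<in>X. a i j * (if inW N s j then v j else 0) - (if inW N s i then a i j * v j else 0))"
      if vS: "\<And>j. j \<notin> X \<Longrightarrow> v j = 0" for v
    proof -
      have "mat_apply a (win N s v) i = (\<Sum>j\<in>X. a i j * win N s v j)"
        by (rule MA) (rule winS[OF vS])
      moreover have "mat_apply a v i = (\<Sum>j\<in>X. a i j * v j)" by (rule MA[OF vS])
      ultimately show ?thesis
        by (cases "inW N s i") (simp_all add: win_def sum_subtractf)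
    qed
    have "e s i = (\<Sum>j\<in>X. a i j * (if inW N s j then x j else 0) - (if inW N s i then a i j * x j else 0))"
      unfolding e_def Ax_def by (rule gen[OF suppX])
    also have "\<dots> = (\<Sum>j\<in>X. a i j * (if inW N s j then ys s j else 0) - (if inW N s i then a i j * ys s j else 0))"
    proof (rule sum.cong[OF refl])
      fix j assume "j \<in> X"
      show "a i j * (if inW N s j then x j else 0) - (if inW N s i then a i j * x j else 0) =
            a i j * (if inW N s j then ys s j else 0) - (if inW N s i then a i j * ys s j else 0)"
      proof (cases "a i j = 0")
        case True then show ?thesis by simp
      next
        case False
        then have "\<bar>i - j\<bar> \<le> int w" using b unfolding band_def by force
        then have "inW N s i \<noteq> inW N s j \<Longrightarrow> ys s j = x j"
          by (auto simp: ys_def Jset_def)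
        then show ?thesis by (cases "inW N s i"; cases "inW N s j") auto
      qed
    qed
    also have "\<dots> = mat_apply a (win N s (ys s)) i - win N s (mat_apply a (ys s)) i"
      by (rule gen[symmetric]) (rule ysS)
    finally show ?thesis .
  qed
  have E2: "Q (e s) \<le> 4 * Kq * R (ys s)" for s
  proof -
    have "Q (e s) \<le> (\<Sum>i\<in>Ir. 2 * (cmod (mat_apply a (win N s (ys s)) i))\<^sup>2 + 2 * (cmod (win N s (mat_apply a (ys s)) i))\<^sup>2)"
      unfolding Q_def E1 by (rule sum_mono) (rule cmod_diff_sq)
    also have "\<dots> = 2 * Q (mat_apply a (win N s (ys s))) + 2 * Q (win N s (mat_apply a (ys s)))"
      by (simp add: Q_def sum.distrib sum_distrib_left)
    also have "\<dots> \<le> 2 * (Kq * R (ys s)) + 2 * (Kq * R (ys s))"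
    proof -
      have "Q (mat_apply a (win N s (ys s))) \<le> Kq * R (win N s (ys s))"
        by (rule KbX) (rule winS, rule ysS)
      also have "\<dots> \<le> Kq * R (ys s)" using winle Kq by (simp add: mult_left_mono)
      finally have 1: "Q (mat_apply a (win N s (ys s))) \<le> Kq * R (ys s)" .
      have "Q (win N s (mat_apply a (ys s))) \<le> Q (mat_apply a (ys s))" by (rule winleQ)
      also have "\<dots> \<le> Kq * R (ys s)" by (rule KbX) (rule ysS)
      finally show ?thesis using 1 by linarith
    qed
    finally show ?thesis by simp
  qed
  have E3: "(\<Sum>s\<in>Sr. R (ys s)) \<le> 4 * real w * R x"
  proof -
    have "(\<Sum>s\<in>Sr. R (ys s)) = (\<Sum>j\<in>X. \<Sum>s\<in>Sr. if j \<in> Jset N w s then (cmod (x j))\<^sup>2 else 0)"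
      unfolding R_def by (subst sum.swap) (auto simp: ys_def intro!: sum.cong)
    also have "\<dots> = (\<Sum>j\<in>X. real (card {s \<in> Sr. j \<in> Jset N w s}) * (cmod (x j))\<^sup>2)"
      using finX by (simp add: sum_if_card)
    also have "\<dots> \<le> (\<Sum>j\<in>X. real (4 * w) * (cmod (x j))\<^sup>2)"
    proof (rule sum_mono, rule mult_right_mono)
      fix j
      show "real (card {s \<in> Sr. j \<in> Jset N w s}) \<le> real (4 * w)"
        using card_J[OF finX(3), of j N w] by (simp only: of_nat_le_iff)
    qed simp
    finally show ?thesis by (simp add: R_def sum_distrib_left)
  qed
  have E4: "(\<Sum>s\<in>Sr. Q (win N s Ax)) = real N * Q Ax"
    unfolding Q_def Sr_def by (rule sum_windows) (auto simp: Ir_def)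
  have E5: "(\<Sum>s\<in>Sr. R (win N s x)) = real N * R x"
    unfolding R_def Sr_def by (rule sum_windows) (auto simp: X_def)
  have E6: "Q (mat_apply a (win N s x)) \<le> (1 + \<eta>) * Q (win N s Ax) + (1 + 1/\<eta>) * Q (e s)" for s
  proof -
    have "Q (mat_apply a (win N s x)) = (\<Sum>i\<in>Ir. (cmod (win N s Ax i + e s i))\<^sup>2)"
      by (simp add: Q_def e_def)
    also have "\<dots> \<le> (\<Sum>i\<in>Ir. (1 + \<eta>) * (cmod (win N s Ax i))\<^sup>2 + (1 + 1/\<eta>) * (cmod (e s i))\<^sup>2)"
      by (rule sum_mono) (rule cmod_add_sq_eta[OF eta])
    also have "\<dots> = (1 + \<eta>) * Q (win N s Ax) + (1 + 1/\<eta>) * Q (e s)"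
      by (simp add: Q_def sum.distrib sum_distrib_left)
    finally show ?thesis .
  qed
  have Npos: "real N > 0" using N1 by simp
  have eta1: "1 + 1/\<eta> \<ge> 0" using eta by simp
  have total: "(\<Sum>s\<in>Sr. Q (mat_apply a (win N s x))) \<le> c * (\<Sum>s\<in>Sr. R (win N s x))"
  proof -
    have "(\<Sum>s\<in>Sr. Q (mat_apply a (win N s x)))
        \<le> (\<Sum>s\<in>Sr. (1 + \<eta>) * Q (win N s Ax) + (1 + 1/\<eta>) * Q (e s))"
      by (rule sum_mono) (rule E6)
    also have "\<dots> = (1 + \<eta>) * (real N * Q Ax) + (1 + 1/\<eta>) * (\<Sum>s\<in>Sr. Q (e s))"
      by (simp add: sum.distrib sum_distrib_left[symmetric] E4)
    also have "\<dots> \<le> (1 + \<eta>) * (real N * (muq * R x)) + (1 + 1/\<eta>) * (4 * Kq * (4 * real w * R x))"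
    proof (rule add_mono)
      show "(1 + \<eta>) * (real N * Q Ax) \<le> (1 + \<eta>) * (real N * (muq * R x))"
        using hx eta Npos by (simp add: Q_def R_def Ax_def Ir_def X_def)
      have "(\<Sum>s\<in>Sr. Q (e s)) \<le> (\<Sum>s\<in>Sr. 4 * Kq * R (ys s))" by (rule sum_mono) (rule E2)
      also have "\<dots> = 4 * Kq * (\<Sum>s\<in>Sr. R (ys s))" by (simp add: sum_distrib_left)
      also have "\<dots> \<le> 4 * Kq * (4 * real w * R x)" using mult_left_mono[OF E3, of "4 * Kq"] Kq by simp
      finally show "(1 + 1/\<eta>) * (\<Sum>s\<in>Sr. Q (e s)) \<le> (1 + 1/\<eta>) * (4 * Kq * (4 * real w * R x))"
        using eta1 by (simp add: mult_left_mono)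
    qed
    also have "\<dots> = c * (real N * R x)"
      using Npos by (simp add: c_def field_simps)
    also have "\<dots> = c * (\<Sum>s\<in>Sr. R (win N s x))" by (simp add: E5)
    finally show ?thesis .
  qed
  show ?thesis
  proof (rule ccontr)
    assume H: "\<not> ?thesis"
    have H': "Q (mat_apply a (win N s x)) > c * R (win N s x)" if "\<exists>j. win N s x j \<noteq> 0" for s
      using H that unfolding Q_def R_def Ir_def X_def c_def by force
    have ge: "c * R (win N s x) \<le> Q (mat_apply a (win N s x))" for s
    proof (cases "\<exists>j. win N s x j \<noteq> 0")
      case True then show ?thesis using H'[OF True] by simp
    next
      case False
      then have z: "\<And>j. win N s x j = 0" by blast
      then have "\<And>i. mat_apply a (win N s x) i = 0" using MA[of "win N s x"] by simp
      then show ?thesis using z by (simp add: Q_def R_def)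
    qed
    have kX: "k \<in> X" using nz suppX by blast
    have s0: "k - 1 \<in> Sr" using kX N1 by (auto simp: X_def Sr_def)
    have nz0: "win N (k - 1) x k \<noteq> 0" using nz N1 by (auto simp: win_def inW_def)
    have "(\<Sum>s\<in>Sr. c * R (win N s x)) < (\<Sum>s\<in>Sr. Q (mat_apply a (win N s x)))"
      by (rule sum_strict_mono_ex1) (use finX ge H' s0 nz0 in blast)+
    then show False using total by (simp add: sum_distrib_left)
  qed
qed



lemma sum_shift_int:
  "(\<Sum>j\<in>{s + lo..s + hi}. f j) = (\<Sum>j'\<in>{lo..hi}. f (s + j'))" for s lo hi :: int
proof -
  have "(\<Sum>j'\<in>{lo..hi}. f (s + j')) = sum f (plus s ` {lo..hi})"
    by (subst sum.reindex) (auto simp: inj_on_def)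
  also have "plus s ` {lo..hi} = {s + lo..s + hi}" by (simp add: add.commute)
  finally show ?thesis by simp
qed

lemma win_vec_formula:
  assumes b: "band w a" and xs: "\<And>j. \<not> inW N s j \<Longrightarrow> x j = 0"
  shows "(l2norm (mat_apply a x))\<^sup>2 =
     (\<Sum>i'\<in>{1 - int w..int N + int w}. (cmod (\<Sum>j'\<in>{1..int N}. a (s + i') (s + j') * x (s + j')))\<^sup>2)"
    and "(l2norm x)\<^sup>2 = (\<Sum>j'\<in>{1..int N}. (cmod (x (s + j')))\<^sup>2)"
proof -
  have xs': "\<And>j. j \<notin> {s + 1..s + int N} \<Longrightarrow> x j = 0" using xs by (auto simp: inW_def)
  have MA: "mat_apply a x i = (\<Sum>j'\<in>{1..int N}. a i (s + j') * x (s + j'))" for i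
    by (subst mat_apply_fin[of "{s + 1..s + int N}", OF _ xs']) (auto simp: sum_shift_int)
  have vanish: "mat_apply a x i = 0" if "i \<notin> {s + (1 - int w)..s + (int N + int w)}" for i
  proof -
    have "mat_apply a x i = (\<Sum>j\<in>{s + 1..s + int N}. a i j * x j)" by (rule mat_apply_fin[OF _ xs']) auto
    also have "\<dots> = 0" by (rule sum.neutral) (use b that in \<open>auto simp: band_def\<close>)
    finally show ?thesis .
  qed
  show "(l2norm (mat_apply a x))\<^sup>2 =
     (\<Sum>i'\<in>{1 - int w..int N + int w}. (cmod (\<Sum>j'\<in>{1..int N}. a (s + i') (s + j') * x (s + j')))\<^sup>2)"
    by (subst l2norm_fin_sq[of "{s + (1 - int w)..s + (int N + int w)}", OF _ vanish]) (auto simp: sum_shift_int MA)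
  show "(l2norm x)\<^sup>2 = (\<Sum>j'\<in>{1..int N}. (cmod (x (s + j')))\<^sup>2)"
    by (subst l2norm_fin_sq[of "{s + 1..s + int N}", OF _ xs']) (auto simp: sum_shift_int)
qed

lemma transfer:
  assumes ba: "band w a" and bb: "band w b"
    and C: "col_submatrices w N a = col_submatrices w N b"
    and xs: "\<And>j. \<not> inW N s j \<Longrightarrow> x j = 0" and nz: "x k \<noteq> 0"
  shows "\<exists>s' y. (\<forall>j. \<not> inW N s' j \<longrightarrow> y j = 0) \<and> (\<exists>k. y k \<noteq> 0) \<and>
           l2norm (mat_apply b y) = l2norm (mat_apply a x) \<and> l2norm y = l2norm x"
proof -
  define M where "M = (\<lambda>i j. if i \<in> {1 - int w .. int N + int w} \<and> j \<in> {1 .. int N}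
                                     then a (s + i) (s + j) else 0)"
  have "M \<in> col_submatrices w N a" unfolding col_submatrices_def M_def by blast
  then have "M \<in> col_submatrices w N b" using C by simp
  then obtain s' where s': "M = (\<lambda>i j. if i \<in> {1 - int w .. int N + int w} \<and> j \<in> {1 .. int N}
                                     then b (s' + i) (s' + j) else 0)"
    unfolding col_submatrices_def by blast
  have ent: "a (s + i) (s + j) = b (s' + i) (s' + j)"
    if "i \<in> {1 - int w .. int N + int w}" "j \<in> {1 .. int N}" for i j
  proof -
    have "M i j = M i j" by simp
    then show ?thesis using that s' unfolding M_def by (metis (no_types, lifting))
  qed
  define y where "y = (\<lambda>j. x (j - s' + s))"
  have ys: "\<And>j. \<not> inW N s' j \<Longrightarrow> y j = 0"
    unfolding y_def by (rule xs) (auto simp: inW_def)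
  have yk: "y (k - s + s') \<noteq> 0" using nz by (simp add: y_def)
  have yy: "\<And>j'. y (s' + j') = x (s + j')" by (simp add: y_def algebra_simps)
  have "(l2norm (mat_apply b y))\<^sup>2 =
     (\<Sum>i'\<in>{1 - int w..int N + int w}. (cmod (\<Sum>j'\<in>{1..int N}. b (s' + i') (s' + j') * y (s' + j')))\<^sup>2)"
    by (rule win_vec_formula(1)[of w b N s' y, OF bb ys])
  also have "\<dots> = (\<Sum>i'\<in>{1 - int w..int N + int w}. (cmod (\<Sum>j'\<in>{1..int N}. a (s + i') (s + j') * x (s + j')))\<^sup>2)"
    by (intro sum.cong refl arg_cong[where f="\<lambda>z. (cmod z)\<^sup>2"]) (simp add: ent yy)
  also have "\<dots> = (l2norm (mat_apply a x))\<^sup>2"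
    by (rule win_vec_formula(1)[of w a N s x, OF ba xs, symmetric])
  finally have "(l2norm (mat_apply b y))\<^sup>2 = (l2norm (mat_apply a x))\<^sup>2" .
  then have n1: "l2norm (mat_apply b y) = l2norm (mat_apply a x)"
    using l2norm_nonneg by (metis power2_eq_iff_nonneg)
  have "(l2norm y)\<^sup>2 = (l2norm x)\<^sup>2"
    using win_vec_formula(2)[of w a N s x, OF ba xs] win_vec_formula(2)[of w b N s' y, OF bb ys] yy by simp
  then have n2: "l2norm y = l2norm x"
    using l2norm_nonneg by (metis power2_eq_iff_nonneg)
  show ?thesis using ys yk n1 n2 by blast
qed



lemma compare:
  assumes ba: "band_op w a" and bb: "band_op w b"
    and Ka: "\<And>n x. (\<And>j. j \<notin> {-n..n} \<Longrightarrow> x j = 0) \<Longrightarrow> l2norm (mat_apply a x) \<le> K * l2norm x"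
    and K0: "K \<ge> 0" and C: "col_submatrices w N a = col_submatrices w N b"
    and N1: "N \<ge> 1" and eta: "\<eta> > 0"
  shows "(lower_norm b)\<^sup>2 \<le> (1 + \<eta>) * (lower_norm a)\<^sup>2 + (1 + 1/\<eta>) * 16 * real w * K\<^sup>2 / real N"
proof -
  define E where "E = (1 + 1/\<eta>) * 16 * real w * K\<^sup>2 / real N"
  have ba': "band w a" using ba by (rule band_opD)
  have bb': "band w b" using bb by (rule band_opD)
  have nub: "lower_norm b \<ge> 0" by (rule lower_nonneg)
  have main: "(lower_norm b)\<^sup>2 \<le> (1 + \<eta>) * \<mu>\<^sup>2 + E" if mu: "\<mu> > lower_norm a" for \<mu>
  proof -
    have mu0: "\<mu> \<ge> 0" using mu lower_nonneg[of a] by linarith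
    obtain n x where xs: "\<forall>j. j \<notin> {-n..n} \<longrightarrow> x j = 0" and nz: "\<exists>k. x k \<noteq> 0"
      and hx: "l2norm (mat_apply a x) \<le> \<mu> * l2norm x"
      using lower_approx[OF ba mu] by blast
    obtain k where k: "x k \<noteq> 0" using nz by blast
    have sqa: "(\<Sum>i\<in>{-n - int w..n + int w}. (cmod (mat_apply a v i))\<^sup>2) = (l2norm (mat_apply a v))\<^sup>2"
      if vs: "\<And>j. j \<notin> {-n..n} \<Longrightarrow> v j = 0" for v
      by (rule l2norm_fin_sq[symmetric]) (auto intro: mat_apply_supp[OF ba' vs])
    have sqn: "(\<Sum>j\<in>{-n..n}. (cmod (v j))\<^sup>2) = (l2norm v)\<^sup>2"
      if vs: "\<And>j. j \<notin> {-n..n} \<Longrightarrow> v j = 0" for v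
      by (rule l2norm_fin_sq[symmetric]) (use vs in auto)
    have Kb: "(\<Sum>i\<in>{-n - int w..n + int w}. (cmod (mat_apply a y i))\<^sup>2) \<le> K\<^sup>2 * (\<Sum>j\<in>{-n..n}. (cmod (y j))\<^sup>2)"
      if ys: "\<And>j. j \<notin> {-n..n} \<Longrightarrow> y j = 0" for y
    proof -
      have "l2norm (mat_apply a y) \<le> K * l2norm y" by (rule Ka[OF ys])
      then have "(l2norm (mat_apply a y))\<^sup>2 \<le> (K * l2norm y)\<^sup>2"
        by (rule power_mono) (rule l2norm_nonneg)
      moreover have "(\<Sum>i\<in>{-n - int w..n + int w}. (cmod (mat_apply a y i))\<^sup>2) = (l2norm (mat_apply a y))\<^sup>2"
        by (rule sqa) (rule ys)
      moreover have "(\<Sum>j\<in>{-n..n}. (cmod (y j))\<^sup>2) = (l2norm y)\<^sup>2"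
        by (rule sqn) (rule ys)
      ultimately show ?thesis by (simp add: power_mult_distrib)
    qed
    have hx2: "(\<Sum>i\<in>{-n - int w..n + int w}. (cmod (mat_apply a x i))\<^sup>2) \<le> \<mu>\<^sup>2 * (\<Sum>j\<in>{-n..n}. (cmod (x j))\<^sup>2)"
    proof -
      have "(l2norm (mat_apply a x))\<^sup>2 \<le> (\<mu> * l2norm x)\<^sup>2"
        by (rule power_mono[OF hx]) (rule l2norm_nonneg)
      moreover have "(\<Sum>i\<in>{-n - int w..n + int w}. (cmod (mat_apply a x i))\<^sup>2) = (l2norm (mat_apply a x))\<^sup>2"
        by (rule sqa) (use xs in blast)
      moreover have "(\<Sum>j\<in>{-n..n}. (cmod (x j))\<^sup>2) = (l2norm x)\<^sup>2"
        by (rule sqn) (use xs in blast)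
      ultimately show ?thesis by (simp add: power_mult_distrib)
    qed
    obtain s where s1: "\<exists>j. win N s x j \<noteq> 0" and s2:
      "(\<Sum>i\<in>{-n - int w..n + int w}. (cmod (mat_apply a (win N s x) i))\<^sup>2)
       \<le> ((1 + \<eta>) * \<mu>\<^sup>2 + (1 + 1/\<eta>) * 16 * real w * K\<^sup>2 / real N) * (\<Sum>j\<in>{-n..n}. (cmod (win N s x j))\<^sup>2)"
      using key_local[where Kq="K\<^sup>2" and muq="\<mu>\<^sup>2" and \<eta>=\<eta> and N=N and k=k, OF ba' _ Kb N1 eta _ hx2 k] xs
      by auto
    define z where "z = win N s x"
    have zs: "\<And>j. j \<notin> {-n..n} \<Longrightarrow> z j = 0" using xs by (simp add: z_def win_def)
    have zw: "\<And>j. \<not> inW N s j \<Longrightarrow> z j = 0" by (simp add: z_def win_def)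
    obtain j0 where j0: "z j0 \<noteq> 0" using s1 z_def by blast
    have zpos: "l2norm z > 0" by (rule l2norm_pos[where n=n and x=z and k=j0, OF zs j0])
    have zc: "(l2norm (mat_apply a z))\<^sup>2 \<le> ((1 + \<eta>) * \<mu>\<^sup>2 + E) * (l2norm z)\<^sup>2"
    proof -
      have "(\<Sum>i\<in>{-n - int w..n + int w}. (cmod (mat_apply a z i))\<^sup>2) = (l2norm (mat_apply a z))\<^sup>2"
        by (rule sqa) (rule zs)
      moreover have "(\<Sum>j\<in>{-n..n}. (cmod (z j))\<^sup>2) = (l2norm z)\<^sup>2"
        by (rule sqn) (rule zs)
      ultimately show ?thesis using s2 unfolding z_def[symmetric] E_def by simp
    qed
    obtain s' y where ys: "\<forall>j. \<not> inW N s' j \<longrightarrow> y j = 0" and ynz: "\<exists>k. y k \<noteq> 0"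
      and yn1: "l2norm (mat_apply b y) = l2norm (mat_apply a z)" and yn2: "l2norm y = l2norm z"
      using transfer[where x=z and k=j0 and s=s, OF ba' bb' C zw j0] by blast
    obtain ky where ky: "y ky \<noteq> 0" using ynz by blast
    have ys': "\<And>j. j \<notin> {-(\<bar>s'\<bar> + int N)..\<bar>s'\<bar> + int N} \<Longrightarrow> y j = 0"
    proof -
      fix j assume "j \<notin> {-(\<bar>s'\<bar> + int N)..\<bar>s'\<bar> + int N}"
      then have "\<not> inW N s' j" unfolding inW_def by (cases "s' < 0") auto
      then show "y j = 0" using ys by blast
    qed
    have "lower_norm b * l2norm y \<le> l2norm (mat_apply b y)"
      by (rule lower_le_fin[where k=ky and x=y and n="\<bar>s'\<bar> + int N", OF bb' ys' ky])
    then have "lower_norm b * l2norm z \<le> l2norm (mat_apply a z)" using yn1 yn2 by simp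
    then have "(lower_norm b * l2norm z)\<^sup>2 \<le> (l2norm (mat_apply a z))\<^sup>2"
      by (rule power_mono) (use nub zpos in simp)
    then have "(lower_norm b)\<^sup>2 * (l2norm z)\<^sup>2 \<le> ((1 + \<eta>) * \<mu>\<^sup>2 + E) * (l2norm z)\<^sup>2"
      using zc by (simp add: power_mult_distrib)
    then show ?thesis using zpos by simp
  qed
  have lim: "((\<lambda>\<mu>. (1 + \<eta>) * \<mu>\<^sup>2 + E) \<longlongrightarrow> (1 + \<eta>) * (lower_norm a)\<^sup>2 + E) (at_right (lower_norm a))"
    by (intro tendsto_intros)
  have "(lower_norm b)\<^sup>2 \<le> (1 + \<eta>) * (lower_norm a)\<^sup>2 + E"
    by (rule tendsto_lowerbound[OF lim])
       (use main eventually_at_right_less[of "lower_norm a"] in \<open>auto elim: eventually_mono\<close>)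
  then show ?thesis by (simp add: E_def)
qed



lemma lower_le_K:
  assumes "band_op w a"
    and Ka: "\<And>n x. (\<And>j. j \<notin> {-n..n} \<Longrightarrow> x j = 0) \<Longrightarrow> l2norm (mat_apply a x) \<le> K * l2norm x"
  shows "lower_norm a \<le> K"
proof -
  have "lower_norm a \<le> l2norm (mat_apply a delta0)" using lower_le delta0 by blast
  also have "\<dots> \<le> K * l2norm delta0" by (rule Ka[of 0]) (use delta0 in auto)
  finally show ?thesis using delta0 by simp
qed

lemma conv:
  assumes bA: "band_op w A" and bAs: "\<And>m. band_op w (As m)" and K0: "K \<ge> 0"
    and KA: "\<And>n x. (\<And>j. j \<notin> {-n..n} \<Longrightarrow> x j = 0) \<Longrightarrow> l2norm (mat_apply A x) \<le> K * l2norm x"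
    and KAs: "\<And>m n x. (\<And>j. j \<notin> {-n..n} \<Longrightarrow> x j = 0) \<Longrightarrow> l2norm (mat_apply (As m) x) \<le> K * l2norm x"
    and C: "\<forall>N. \<exists>m0. \<forall>m\<ge>m0. col_submatrices w N (As m) = col_submatrices w N A"
  shows "(\<lambda>m. lower_norm (As m)) \<longlonglongrightarrow> lower_norm A"
proof -
  have sq: "(\<lambda>m. (lower_norm (As m))\<^sup>2) \<longlonglongrightarrow> (lower_norm A)\<^sup>2"
  proof (rule LIMSEQ_I)
    fix r :: real assume r: "r > 0"
    define \<eta> where "\<eta> = r / (2 * (K\<^sup>2 + 1))"
    have "2 * (K\<^sup>2 + 1) > (0::real)" by (smt (verit) zero_le_power2)
    then have eta: "\<eta> > 0" using r unfolding \<eta>_def by (rule divide_pos_pos[rotated])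
    have etaK: "\<eta> * K\<^sup>2 < r / 2"
    proof -
      have "\<eta> * K\<^sup>2 = (r / 2) * (K\<^sup>2 / (K\<^sup>2 + 1))" by (simp add: \<eta>_def field_simps)
      also have "\<dots> < (r / 2) * 1"
      proof (rule mult_strict_left_mono)
        have kp: "K\<^sup>2 + 1 > (0::real)" by (smt (verit) zero_le_power2)
        then show "K\<^sup>2 / (K\<^sup>2 + 1) < 1" by (simp add: divide_less_eq)
      qed (use r in simp)
      finally show ?thesis by simp
    qed
    define B where "B = 2 * ((1 + 1/\<eta>) * 16 * real w * K\<^sup>2) / r"
    obtain N0 :: nat where N0: "B < real N0" using reals_Archimedean2 by blast
    define N where "N = Suc N0"
    have N1: "N \<ge> 1" and NB: "B < real N" using N0 by (auto simp: N_def)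
    define E where "E = (1 + 1/\<eta>) * 16 * real w * K\<^sup>2 / real N"
    have E: "E < r / 2"
    proof -
      have Npos: "real N > 0" using N1 by simp
      have X: "(1 + 1/\<eta>) * 16 * real w * K\<^sup>2 = B * r / 2" using r by (simp add: B_def)
      have "E = (B * r / 2) / real N" unfolding E_def X ..
      then have "E = (r / 2) * (B / real N)" by simp
      also have "\<dots> < (r / 2) * 1"
        by (rule mult_strict_left_mono) (use NB Npos r in auto)
      finally show ?thesis by simp
    qed
    obtain m0 where m0: "\<forall>m\<ge>m0. col_submatrices w N (As m) = col_submatrices w N A" using C by blast
    have nuA: "0 \<le> lower_norm A" "lower_norm A \<le> K"
      by (rule lower_nonneg, rule lower_le_K[OF bA], rule KA, blast)
    have "norm ((lower_norm (As m))\<^sup>2 - (lower_norm A)\<^sup>2) < r" if m: "m \<ge> m0" for m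
    proof -
      have Cm: "col_submatrices w N (As m) = col_submatrices w N A" using m0 m by blast
      have num: "0 \<le> lower_norm (As m)" "lower_norm (As m) \<le> K"
        by (rule lower_nonneg, rule lower_le_K[OF bAs], rule KAs, blast)
      have 1: "(lower_norm (As m))\<^sup>2 \<le> (1 + \<eta>) * (lower_norm A)\<^sup>2 + E"
        unfolding E_def by (rule compare[OF bA bAs KA K0 Cm[symmetric] N1 eta])
      have 2: "(lower_norm A)\<^sup>2 \<le> (1 + \<eta>) * (lower_norm (As m))\<^sup>2 + E"
        unfolding E_def by (rule compare[OF bAs bA KAs K0 Cm N1 eta])
      have 3: "\<eta> * (lower_norm A)\<^sup>2 \<le> \<eta> * K\<^sup>2"
        using nuA eta by (intro mult_left_mono power_mono) auto
      have 4: "\<eta> * (lower_norm (As m))\<^sup>2 \<le> \<eta> * K\<^sup>2"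
        using num eta by (intro mult_left_mono power_mono) auto
      show ?thesis using 1 2 3 4 etaK E by (simp add: algebra_simps abs_if)
    qed
    then show "\<exists>m0. \<forall>m\<ge>m0. norm ((lower_norm (As m))\<^sup>2 - (lower_norm A)\<^sup>2) < r" by blast
  qed
  have "(\<lambda>m. sqrt ((lower_norm (As m))\<^sup>2)) \<longlonglongrightarrow> sqrt ((lower_norm A)\<^sup>2)"
    by (rule tendsto_real_sqrt[OF sq])
  then show ?thesis using lower_nonneg by simp
qed

lemma shift_band: "band w a \<Longrightarrow> band w (shift_id a lam)"
  by (auto simp: band_def shift_id_def)

lemma shift_apply:
  assumes "band w a"
  shows "mat_apply (shift_id a lam) x i = mat_apply a x i - lam * x i"
proof -
  have "mat_apply (shift_id a lam) x i = (\<Sum>j\<in>{i - int w..i + int w}. (a i j - (if i = j then lam else 0)) * x j)"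
    using mat_apply_band[OF shift_band[OF assms]] by (simp add: shift_id_def)
  also have "\<dots> = (\<Sum>j\<in>{i - int w..i + int w}. a i j * x j) - (\<Sum>j\<in>{i - int w..i + int w}. if i = j then lam * x j else 0)"
    by (subst sum_subtractf[symmetric], rule sum.cong) (auto simp: left_diff_distrib)
  also have "\<dots> = mat_apply a x i - lam * x i"
    by (simp add: mat_apply_band[OF assms] sum.delta)
  finally show ?thesis .
qed

lemma shift_norm:
  assumes "band w a" "x \<in> l2" "mat_apply a x \<in> l2"
  shows "mat_apply (shift_id a lam) x \<in> l2 \<and>
         l2norm (mat_apply (shift_id a lam) x) \<le> l2norm (mat_apply a x) + cmod lam * l2norm x"
proof -
  have eq: "mat_apply (shift_id a lam) x = (\<lambda>i. mat_apply a x i - lam * x i)"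
    using shift_apply[OF assms(1)] by blast
  note c = l2_cmult[OF assms(2), of lam]
  show ?thesis unfolding eq using l2_diff[OF assms(3) conjunct1[OF c]] conjunct2[OF c] by simp
qed

lemma shift_band_op:
  assumes "band_op w a"
  shows "band_op w (shift_id a lam)"
proof -
  have b: "band w a" using assms by (rule band_opD)
  obtain C where C: "\<forall>x\<in>l2. mat_apply a x \<in> l2 \<and> l2norm (mat_apply a x) \<le> C * l2norm x"
    using assms by (auto simp: band_op_def)
  have "\<forall>x\<in>l2. mat_apply (shift_id a lam) x \<in> l2 \<and>
      l2norm (mat_apply (shift_id a lam) x) \<le> (C + cmod lam) * l2norm x"
  proof
    fix x assume x: "x \<in> l2"
    note s = shift_norm[OF b x conjunct1[OF C[rule_format, OF x]], of lam]
    then show "mat_apply (shift_id a lam) x \<in> l2 \<and>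
      l2norm (mat_apply (shift_id a lam) x) \<le> (C + cmod lam) * l2norm x"
      using C x by (auto simp: algebra_simps)
  qed
  then show ?thesis using shift_band[OF b] by (auto simp: band_op_def band_def)
qed

lemma shift_K:
  assumes "band_op w a"
    and Ka: "\<And>n x. (\<And>j. j \<notin> {-n..n} \<Longrightarrow> x j = 0) \<Longrightarrow> l2norm (mat_apply a x) \<le> K * l2norm x"
    and xs: "\<And>j. j \<notin> {-n..n} \<Longrightarrow> x j = 0"
  shows "l2norm (mat_apply (shift_id a lam) x) \<le> (K + cmod lam) * l2norm x"
proof -
  have b: "band w a" using assms(1) by (rule band_opD)
  have x: "x \<in> l2" by (rule l2_fin[of "{-n..n}"]) (use xs in auto)
  obtain C where C: "\<forall>x\<in>l2. mat_apply a x \<in> l2 \<and> l2norm (mat_apply a x) \<le> C * l2norm x"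
    using assms(1) by (auto simp: band_op_def)
  have "l2norm (mat_apply (shift_id a lam) x) \<le> l2norm (mat_apply a x) + cmod lam * l2norm x"
    using shift_norm[OF b x] C x by blast
  also have "\<dots> \<le> K * l2norm x + cmod lam * l2norm x" using Ka[OF xs] by simp
  finally show ?thesis by (simp add: algebra_simps)
qed

definition subm :: "nat \<Rightarrow> nat \<Rightarrow> (int \<Rightarrow> int \<Rightarrow> complex) \<Rightarrow> int \<Rightarrow> int \<Rightarrow> int \<Rightarrow> complex" where
  "subm w N a k = (\<lambda>i j. if i \<in> {1 - int w .. int N + int w} \<and> j \<in> {1 .. int N}
                                     then a (k + i) (k + j) else 0)"

lemma col_range: "col_submatrices w N a = range (subm w N a)"
  by (auto simp: col_submatrices_def subm_def)

lemma shift_cols: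
  "col_submatrices w N (shift_id a lam) =
     (\<lambda>M i j. if i \<in> {1 - int w .. int N + int w} \<and> j \<in> {1 .. int N}
              then M i j - (if i = j then lam else 0) else 0) ` col_submatrices w N a"
proof -
  have "subm w N (shift_id a lam) k = (\<lambda>M i j. if i \<in> {1 - int w .. int N + int w} \<and> j \<in> {1 .. int N}
              then M i j - (if i = j then lam else 0) else 0) (subm w N a k)" for k
    by (auto simp: subm_def shift_id_def fun_eq_iff)
  then show ?thesis unfolding col_range by (simp add: image_image)
qed

theorem proposition4p9:
  fixes A :: "int \<Rightarrow> int \<Rightarrow> complex" and As :: "nat \<Rightarrow> int \<Rightarrow> int \<Rightarrow> complex" and w :: nat
  assumes "band_op w A"
    and "\<And>m. band_op w (As m)"
    and "bdd_above (range (\<lambda>m. opnorm (As m)))"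
    and "\<forall>N::nat. \<exists>m0. \<forall>m\<ge>m0. col_submatrices w N (As m) = col_submatrices w N A"
  shows "((\<lambda>m. lower_norm (As m)) \<longlonglongrightarrow> lower_norm A) \<and>
           (\<forall>lam. (\<lambda>m. lower_norm (shift_id (As m) lam)) \<longlonglongrightarrow> lower_norm (shift_id A lam))"
proof -
  obtain M where M: "\<And>m. opnorm (As m) \<le> M" using assms(3) by (auto simp: bdd_above_def)
  define K where "K = max M (opnorm A)"
  have K0: "K \<ge> 0" using opnorm_nonneg[OF assms(1)] by (simp add: K_def)
  have KA: "l2norm (mat_apply A x) \<le> K * l2norm x" if "\<And>j. j \<notin> {-n..n} \<Longrightarrow> x j = 0" for n x
  proof -
    have "l2norm (mat_apply A x) \<le> opnorm A * l2norm x" by (rule opnorm_bound[OF assms(1) that])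
    also have "\<dots> \<le> K * l2norm x" by (rule mult_right_mono) (auto simp: K_def l2norm_nonneg)
    finally show ?thesis .
  qed
  have KAs: "l2norm (mat_apply (As m) x) \<le> K * l2norm x" if "\<And>j. j \<notin> {-n..n} \<Longrightarrow> x j = 0" for m n x
  proof -
    have "l2norm (mat_apply (As m) x) \<le> opnorm (As m) * l2norm x" by (rule opnorm_bound[OF assms(2) that])
    also have "\<dots> \<le> K * l2norm x" by (rule mult_right_mono) (use M[of m] in \<open>auto simp: K_def l2norm_nonneg\<close>)
    finally show ?thesis .
  qed
  have part1: "(\<lambda>m. lower_norm (As m)) \<longlonglongrightarrow> lower_norm A"
    by (rule conv[OF assms(1) assms(2) K0 KA KAs assms(4)])
  have part2: "(\<lambda>m. lower_norm (shift_id (As m) lam)) \<longlonglongrightarrow> lower_norm (shift_id A lam)" for lam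
  proof (rule conv[where K="K + cmod lam"])
    show "band_op w (shift_id A lam)" by (rule shift_band_op[OF assms(1)])
    show "\<And>m. band_op w (shift_id (As m) lam)" by (rule shift_band_op[OF assms(2)])
    show "0 \<le> K + cmod lam" using K0 by simp
    show "\<And>n x. (\<And>j. j \<notin> {-n..n} \<Longrightarrow> x j = 0) \<Longrightarrow>
        l2norm (mat_apply (shift_id A lam) x) \<le> (K + cmod lam) * l2norm x"
      by (rule shift_K[OF assms(1) KA]) auto
    show "\<And>m n x. (\<And>j. j \<notin> {-n..n} \<Longrightarrow> x j = 0) \<Longrightarrow>
        l2norm (mat_apply (shift_id (As m) lam) x) \<le> (K + cmod lam) * l2norm x"
      by (rule shift_K[OF assms(2) KAs]) auto
    show "\<forall>N. \<exists>m0. \<forall>m\<ge>m0. col_submatrices w N (shift_id (As m) lam) = col_submatrices w N (shift_id A lam)"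
    proof
      fix N :: nat
      obtain m0 where "\<forall>m\<ge>m0. col_submatrices w N (As m) = col_submatrices w N A"
        using assms(4) by blast
      then show "\<exists>m0. \<forall>m\<ge>m0. col_submatrices w N (shift_id (As m) lam) = col_submatrices w N (shift_id A lam)"
        unfolding shift_cols by auto
    qed
  qed
  show ?thesis using part1 part2 by blast
qed


end
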